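(* Let $p$ be a prime, and let $K=\{k_1<k_2<\cdots<k_r\}$ and $L=\{l_1,\ldots,l_s\}$ be disjoint subsets of $\{0,1,\ldots,p-1\}$. Let $\mathcal{A}=\{A_1,\ldots,A_m\}$ be a family of distinct subsets of $[n]$ with $|A_i|\pmod p\in K$ for all $i$ and $|A_i\cap A_j|\pmod p\in L$ for all $i\neq j$. Suppose $n\ge s+k_r$, and suppose that either $n<p+k_1$ or $(s-2r+1)+k_r<p+k_1-1$. Consider, as functions $\{0,1\}^n\to\mathbb{F}_p$, the polynomials \begin{itemize} \item $f_{A_j}(x)=\prod_{i=1}^{s}(v_{A_j}\cdot x-l_i)$ for $1\le j\le m$; \item $q_S(x)=(1-x_n)\prod_{i\in S}x_i$ for every $S\subseteq[n-1]$ with $|S|\le s-1$; \item $g_I(x)=g(x)\prod_{i\in I}x_i$ for every $I\subseteq[n-1]$ with $|I|\le s-2r$, where $g(x)=\prod_{h\in K\cup(K-1)}\big(x_1+\cdots+x_{n-1}-h\big)$ and $K-1=\{k-1:k\in K\}$. \end{itemize} Then these polynomials are linearly independent over $\mathbb{F}_p$. Consequently \[ |\mathcal{A}|\le \binom{n-1}{s}+\binom{n-1}{s-1}+\cdots+\binom{n-1}{s-2r+1}. \]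
   Context: $x=(x_1,\ldots,x_n)$ with each $x_i\in\{0,1\}$; for $A\subseteq[n]$, $v_A\in\{0,1\}^n$ is the incidence vector of $A$ ($i$-th coordinate $1$ iff $i\in A$), and $v_A\cdot x=\sum_{i\in A}x_i$. If $s-2r<0$ the third family is empty. Binomial coefficients with negative lower index are $0$. *)

theory Defs
  imports "HOL-Computational_Algebra.Primes"
begin

(* A point x in {0,1}^n is represented by its support X \<subseteq> {1..n};
   x_i = xv X i. *)
definition xv :: "nat set \<Rightarrow> nat \<Rightarrow> int" where
  "xv X i = (if i \<in> X then 1 else 0)"

definition dotv :: "nat set \<Rightarrow> nat set \<Rightarrow> int" where
  "dotv A X = (\<Sum>i\<in>A. xv X i)"

definition fpoly :: "nat set \<Rightarrow> nat set \<Rightarrow> nat set \<Rightarrow> int" where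
  "fpoly L A X = (\<Prod>l\<in>L. dotv A X - int l)"

definition qpoly :: "nat \<Rightarrow> nat set \<Rightarrow> nat set \<Rightarrow> int" where
  "qpoly n S X = (1 - xv X n) * (\<Prod>i\<in>S. xv X i)"

(* g(x) = prod_{h in K \<union> (K-1)} (x_1 + ... + x_{n-1} - h), the set K \<union> (K-1)
   taken as a set of elements of F_p (residues mod p) *)
definition gpoly :: "nat \<Rightarrow> nat \<Rightarrow> nat set \<Rightarrow> nat set \<Rightarrow> int" where
  "gpoly p n K X = (\<Prod>h\<in>((\<lambda>h. h mod int p) ` (int ` K \<union> (\<lambda>k. int k - 1) ` K)).
                     (\<Sum>i\<in>{1..n-1}. xv X i) - h)"

definition gIpoly :: "nat \<Rightarrow> nat \<Rightarrow> nat set \<Rightarrow> nat set \<Rightarrow> nat set \<Rightarrow> int" where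
  "gIpoly p n K I X = gpoly p n K X * (\<Prod>i\<in>I. xv X i)"

(* Linear independence over F_p of the family (F i)_{i \<in> Idx} of functions D \<rightarrow> F_p,
   with F_p-values represented by integers modulo p. *)
definition lin_indep_mod :: "nat \<Rightarrow> 'i set \<Rightarrow> ('i \<Rightarrow> 'x \<Rightarrow> int) \<Rightarrow> 'x set \<Rightarrow> bool" where
  "lin_indep_mod p Idx F D \<longleftrightarrow>
     (\<forall>c. (\<forall>x\<in>D. (\<Sum>i\<in>Idx. c i * F i x) mod int p = 0) \<longrightarrow> (\<forall>i\<in>Idx. c i mod int p = 0))"

definition allpolys :: "nat \<Rightarrow> nat \<Rightarrow> nat set \<Rightarrow> nat set \<Rightarrow>
    (nat set + nat set + nat set) \<Rightarrow> nat set \<Rightarrow> int" where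
  "allpolys p n K L idx = (case idx of
       Inl A \<Rightarrow> fpoly L A
     | Inr (Inl S) \<Rightarrow> qpoly n S
     | Inr (Inr I) \<Rightarrow> gIpoly p n K I)"

end

theory Submission
  imports Defs "HOL-Library.FuncSet"
begin


lemma prod_xv: "finite S \<Longrightarrow> (\<Prod>i\<in>S. xv X i) = (if S \<subseteq> X then 1 else 0)"
  by (induction S rule: finite_induct) (auto simp: xv_def)

lemma dotv_card: "finite A \<Longrightarrow> dotv A X = int (card (A \<inter> X))"
  unfolding dotv_def xv_def by (simp add: sum.If_cases)

definition Ts :: "nat \<Rightarrow> nat \<Rightarrow> nat set set" where
  "Ts n d = {T. T \<subseteq> {1..n} \<and> card T \<le> d}"

lemma finite_Ts: "finite (Ts n d)"
  by (rule finite_subset[of _ "Pow {1..n}"]) (auto simp: Ts_def)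

definition lowdeg :: "nat \<Rightarrow> nat \<Rightarrow> (nat set \<Rightarrow> int) \<Rightarrow> bool" where
  "lowdeg n d F \<longleftrightarrow> (\<exists>b. \<forall>X. X \<subseteq> {1..n} \<longrightarrow> F X = (\<Sum>T\<in>Ts n d. b T * (if T \<subseteq> X then 1 else 0)))"

lemma lowdeg_mono:
  assumes "lowdeg n d F" "d \<le> e" shows "lowdeg n e F"
proof -
  obtain b where b: "\<And>X. X \<subseteq> {1..n} \<Longrightarrow> F X = (\<Sum>T\<in>Ts n d. b T * (if T \<subseteq> X then 1 else 0))"
    using assms(1) unfolding lowdeg_def by blast
  define b' where "b' T = (if T \<in> Ts n d then b T else 0)" for T
  have sub: "Ts n d \<subseteq> Ts n e" using assms(2) by (auto simp: Ts_def)
  show ?thesis unfolding lowdeg_def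
  proof (intro exI allI impI)
    fix X :: "nat set" assume X: "X \<subseteq> {1..n}"
    have "(\<Sum>T\<in>Ts n e. b' T * (if T \<subseteq> X then 1 else 0)) = (\<Sum>T\<in>Ts n d. b' T * (if T \<subseteq> X then 1 else 0))"
      by (rule sum.mono_neutral_right[OF finite_Ts sub]) (auto simp: b'_def)
    also have "\<dots> = F X" using b[OF X] by (simp add: b'_def)
    finally show "F X = (\<Sum>T\<in>Ts n e. b' T * (if T \<subseteq> X then 1 else 0))" by simp
  qed
qed

lemma lowdeg_mono_T:
  assumes "T \<subseteq> {1..n}" shows "lowdeg n (card T) (\<lambda>X. if T \<subseteq> X then 1 else 0)"
  unfolding lowdeg_def
proof (intro exI allI impI)
  fix X :: "nat set" assume "X \<subseteq> {1..n}"
  have "T \<in> Ts n (card T)" using assms by (simp add: Ts_def)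
  then show "(if T \<subseteq> X then 1 else 0) = (\<Sum>U\<in>Ts n (card T). (if U = T then 1 else 0) * (if U \<subseteq> X then 1 else 0 :: int))"
  proof -
    have "(\<Sum>U\<in>Ts n (card T). (if U = T then 1 else 0) * (if U \<subseteq> X then 1 else 0 :: int))
       = (\<Sum>U\<in>Ts n (card T). if U = T then (if U \<subseteq> X then 1 else 0) else 0)"
      by (intro sum.cong) auto
    with \<open>T \<in> Ts n (card T)\<close> show ?thesis by (simp add: finite_Ts)
  qed
qed

lemma lowdeg_const: "lowdeg n 0 (\<lambda>X. c)"
proof -
  have "Ts n 0 = {{}}" by (auto simp: Ts_def card_eq_0_iff intro: finite_subset)
  then show ?thesis unfolding lowdeg_def by (intro exI[of _ "\<lambda>_. c"]) simp
qed

lemma lowdeg_add: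
  assumes "lowdeg n d F" "lowdeg n d G" shows "lowdeg n d (\<lambda>X. F X + G X)"
proof -
  obtain b where b: "\<And>X. X \<subseteq> {1..n} \<Longrightarrow> F X = (\<Sum>T\<in>Ts n d. b T * (if T \<subseteq> X then 1 else 0))"
    using assms(1) unfolding lowdeg_def by blast
  obtain c where c: "\<And>X. X \<subseteq> {1..n} \<Longrightarrow> G X = (\<Sum>T\<in>Ts n d. c T * (if T \<subseteq> X then 1 else 0))"
    using assms(2) unfolding lowdeg_def by blast
  show ?thesis unfolding lowdeg_def
    by (intro exI[of _ "\<lambda>T. b T + c T"]) (simp add: b c distrib_right sum.distrib)
qed

lemma lowdeg_scale:
  assumes "lowdeg n d F" shows "lowdeg n d (\<lambda>X. a * F X)"
proof -
  obtain b where b: "\<And>X. X \<subseteq> {1..n} \<Longrightarrow> F X = (\<Sum>T\<in>Ts n d. b T * (if T \<subseteq> X then 1 else 0))"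
    using assms(1) unfolding lowdeg_def by blast
  show ?thesis unfolding lowdeg_def
    by (intro exI[of _ "\<lambda>T. a * b T"]) (simp add: b sum_distrib_left mult.assoc)
qed

lemma lowdeg_sum:
  assumes "finite A" "\<forall>a\<in>A. lowdeg n d (F a)" shows "lowdeg n d (\<lambda>X. \<Sum>a\<in>A. F a X)"
  using assms
proof (induction A rule: finite_induct)
  case empty
  then show ?case using lowdeg_mono[OF lowdeg_const[of n 0]] by simp
next
  case (insert x A')
  then show ?case by (simp add: lowdeg_add)
qed

lemma lowdeg_mult:
  assumes "lowdeg n d F" "lowdeg n e G" shows "lowdeg n (d + e) (\<lambda>X. F X * G X)"
proof -
  obtain b where b: "\<And>X. X \<subseteq> {1..n} \<Longrightarrow> F X = (\<Sum>T\<in>Ts n d. b T * (if T \<subseteq> X then 1 else 0))"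
    using assms(1) unfolding lowdeg_def by blast
  obtain c where c: "\<And>X. X \<subseteq> {1..n} \<Longrightarrow> G X = (\<Sum>T\<in>Ts n e. c T * (if T \<subseteq> X then 1 else 0))"
    using assms(2) unfolding lowdeg_def by blast
  define beta where "beta V = (\<Sum>T\<in>Ts n d. \<Sum>U\<in>Ts n e. if T \<union> U = V then b T * c U else 0)" for V
  show ?thesis unfolding lowdeg_def
  proof (intro exI[of _ beta] allI impI)
    fix X :: "nat set" assume X: "X \<subseteq> {1..n}"
    have mem: "T \<union> U \<in> Ts n (d+e)" if "T \<in> Ts n d" "U \<in> Ts n e" for T U
    proof -
      have "finite T" "finite U" using that by (auto simp: Ts_def intro: finite_subset)
      have "card (T \<union> U) \<le> card T + card U" by (simp add: card_Un_le)
      then show ?thesis using that by (auto simp: Ts_def)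
    qed
    have "(\<Sum>V\<in>Ts n (d+e). beta V * (if V \<subseteq> X then 1 else 0))
        = (\<Sum>V\<in>Ts n (d+e). \<Sum>T\<in>Ts n d. \<Sum>U\<in>Ts n e. if T \<union> U = V then b T * c U * (if V \<subseteq> X then 1 else 0) else 0)"
      unfolding beta_def sum_distrib_right by (intro sum.cong refl) auto
    also have "\<dots> = (\<Sum>T\<in>Ts n d. \<Sum>U\<in>Ts n e. \<Sum>V\<in>Ts n (d+e). if T \<union> U = V then b T * c U * (if V \<subseteq> X then 1 else 0) else 0)"
      by (subst sum.swap) (subst (2) sum.swap, rule refl)
    also have "\<dots> = (\<Sum>T\<in>Ts n d. \<Sum>U\<in>Ts n e. b T * c U * (if T \<union> U \<subseteq> X then 1 else 0))"
      by (intro sum.cong refl) (simp add: finite_Ts mem)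
    also have "\<dots> = F X * G X"
      by (simp add: b[OF X] c[OF X] sum_product) (intro sum.cong refl, auto)
    finally show "F X * G X = (\<Sum>V\<in>Ts n (d+e). beta V * (if V \<subseteq> X then 1 else 0))" by simp
  qed
qed

lemma lowdeg_prod:
  assumes "finite A" "\<forall>a\<in>A. lowdeg n 1 (F a)" shows "lowdeg n (card A) (\<lambda>X. \<Prod>a\<in>A. F a X)"
  using assms
proof (induction A rule: finite_induct)
  case empty
  then show ?case using lowdeg_const[of n 1] by simp
next
  case (insert x A')
  then show ?case using lowdeg_mult[of n 1 "F x"] by simp
qed

lemma lowdeg_xv: "i \<in> {1..n} \<Longrightarrow> lowdeg n 1 (\<lambda>X. xv X i)"
  using lowdeg_mono_T[of "{i}" n] by (simp add: xv_def)



lemma dim_bound: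
  fixes F :: "'i \<Rightarrow> 'x \<Rightarrow> int" and m :: "'t \<Rightarrow> 'x \<Rightarrow> int"
  assumes p: "prime p" and fI: "finite Idx" and fT: "finite Ts0" and ind: "lin_indep_mod p Idx F D"
    and rep: "\<forall>i\<in>Idx. \<exists>b. \<forall>x\<in>D. F i x = (\<Sum>T\<in>Ts0. b T * m T x)"
  shows "card Idx \<le> card Ts0"
proof -
  obtain B where B: "\<forall>i\<in>Idx. \<forall>x\<in>D. F i x = (\<Sum>T\<in>Ts0. B i T * m T x)"
    using bchoice[OF rep] by blast
  have p1: "1 < p" using p prime_gt_1_nat by blast
  define C1 where "C1 = PiE Idx (\<lambda>_. {0..<int p})"
  define C2 where "C2 = PiE Ts0 (\<lambda>_. {0..<int p})"
  define Phi where "Phi c = (\<lambda>x\<in>D. (\<Sum>i\<in>Idx. c i * F i x) mod int p)" for c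
  define Psi where "Psi c = (\<lambda>x\<in>D. (\<Sum>T\<in>Ts0. c T * m T x) mod int p)" for c
  have inj: "inj_on Phi C1"
  proof (rule inj_onI)
    fix c c' assume c: "c \<in> C1" and c': "c' \<in> C1" and eq: "Phi c = Phi c'"
    have h0: "\<forall>x\<in>D. (\<Sum>i\<in>Idx. (c i - c' i) * F i x) mod int p = 0"
    proof
      fix x assume x: "x \<in> D"
      have "(\<Sum>i\<in>Idx. c i * F i x) mod int p = (\<Sum>i\<in>Idx. c' i * F i x) mod int p"
        using fun_cong[OF eq, of x] x by (simp add: Phi_def)
      then have "int p dvd (\<Sum>i\<in>Idx. c i * F i x) - (\<Sum>i\<in>Idx. c' i * F i x)"
        by (simp only: mod_eq_dvd_iff)
      moreover have "(\<Sum>i\<in>Idx. (c i - c' i) * F i x) = (\<Sum>i\<in>Idx. c i * F i x) - (\<Sum>i\<in>Idx. c' i * F i x)"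
        by (simp add: left_diff_distrib sum_subtractf)
      ultimately show "(\<Sum>i\<in>Idx. (c i - c' i) * F i x) mod int p = 0"
        by (simp only: dvd_eq_mod_eq_0)
    qed
    have z: "\<forall>i\<in>Idx. (c i - c' i) mod int p = 0"
      by (rule mp[OF spec[OF ind[unfolded lin_indep_mod_def], of "\<lambda>i. c i - c' i"] h0])
    show "c = c'"
    proof (rule ext)
      fix i show "c i = c' i"
      proof (cases "i \<in> Idx")
        case True
        have r: "c i \<in> {0..<int p}" "c' i \<in> {0..<int p}" using c c' True by (auto simp: C1_def)
        have "(c i - c' i) mod int p = 0" using z True by blast
        then have "int p dvd c i - c' i" by (simp only: dvd_eq_mod_eq_0)
        then have "c i mod int p = c' i mod int p" by (simp only: mod_eq_dvd_iff)
        moreover have "c i mod int p = c i" using r(1) by (intro mod_pos_pos_trivial) auto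
        moreover have "c' i mod int p = c' i" using r(2) by (intro mod_pos_pos_trivial) auto
        ultimately show ?thesis by simp
      next
        case False
        then show ?thesis using PiE_arb[OF c[unfolded C1_def] False] PiE_arb[OF c'[unfolded C1_def] False] by simp
      qed
    qed
  qed
  have sub: "Phi ` C1 \<subseteq> Psi ` C2"
  proof
    fix y assume "y \<in> Phi ` C1"
    then obtain c where c: "c \<in> C1" and y: "y = Phi c" by blast
    define beta where "beta = (\<lambda>T\<in>Ts0. (\<Sum>i\<in>Idx. c i * B i T) mod int p)"
    have "beta \<in> C2" using p1 by (auto simp: beta_def C2_def)
    moreover have "Phi c = Psi beta"
    proof (rule ext)
      fix x show "Phi c x = Psi beta x"
      proof (cases "x \<in> D")
        case True
        have "(\<Sum>i\<in>Idx. c i * F i x) = (\<Sum>i\<in>Idx. c i * (\<Sum>T\<in>Ts0. B i T * m T x))"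
          using B True by simp
        also have "\<dots> = (\<Sum>T\<in>Ts0. (\<Sum>i\<in>Idx. c i * B i T) * m T x)"
          by (simp only: sum_distrib_left sum_distrib_right mult.assoc, rule sum.swap)
        finally have e1: "(\<Sum>i\<in>Idx. c i * F i x) = (\<Sum>T\<in>Ts0. (\<Sum>i\<in>Idx. c i * B i T) * m T x)" .
        have "(\<Sum>T\<in>Ts0. (\<Sum>i\<in>Idx. c i * B i T) * m T x) mod int p
            = (\<Sum>T\<in>Ts0. ((\<Sum>i\<in>Idx. c i * B i T) * m T x) mod int p) mod int p"
          by (rule mod_sum_eq[symmetric])
        also have "\<dots> = (\<Sum>T\<in>Ts0. (((\<Sum>i\<in>Idx. c i * B i T) mod int p) * m T x) mod int p) mod int p"
          by (rule arg_cong[where f="\<lambda>z. z mod int p"], rule sum.cong, rule refl, rule mod_mult_left_eq[symmetric])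
        also have "\<dots> = (\<Sum>T\<in>Ts0. (((\<Sum>i\<in>Idx. c i * B i T) mod int p) * m T x)) mod int p"
          by (rule mod_sum_eq)
        also have "\<dots> = (\<Sum>T\<in>Ts0. beta T * m T x) mod int p"
          by (intro arg_cong[where f="\<lambda>z. z mod int p"] sum.cong refl) (simp add: beta_def)
        finally show ?thesis using True e1 by (simp add: Phi_def Psi_def)
      next
        case False
        then show ?thesis by (simp add: Phi_def Psi_def)
      qed
    qed
    ultimately show "y \<in> Psi ` C2" using y by blast
  qed
  have fC2: "finite C2" by (simp add: C2_def fT finite_PiE)
  have "card C1 = card (Phi ` C1)" using inj by (simp add: card_image)
  also have "\<dots> \<le> card (Psi ` C2)" using sub fC2 by (intro card_mono) auto
  also have "\<dots> \<le> card C2" using fC2 by (rule card_image_le)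
  finally have "p ^ card Idx \<le> p ^ card Ts0"
    by (simp add: C1_def C2_def card_PiE fI fT)
  then show ?thesis using power_le_imp_le_exp[OF p1] by blast
qed

lemma mobius:
  fixes R :: "nat set \<Rightarrow> int"
  assumes "finite U" "\<forall>S\<in>U. finite S" "\<forall>S\<in>U. d dvd (\<Sum>T\<in>{T\<in>U. T \<subseteq> S}. R T)"
  shows "\<forall>S\<in>U. d dvd R S"
proof
  fix S assume "S \<in> U"
  then show "d dvd R S"
  proof (induction "card S" arbitrary: S rule: less_induct)
    case less
    have fS: "finite S" using less.prems assms(2) by blast
    have split: "(\<Sum>T\<in>{T\<in>U. T \<subseteq> S}. R T) = R S + (\<Sum>T\<in>{T\<in>U. T \<subseteq> S} - {S}. R T)"
      using less.prems assms(1) by (intro sum.remove) auto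
    have "d dvd (\<Sum>T\<in>{T\<in>U. T \<subseteq> S} - {S}. R T)"
    proof (rule dvd_sum)
      fix T assume "T \<in> {T\<in>U. T \<subseteq> S} - {S}"
      then have "T \<in> U" "T \<subset> S" by auto
      then have "card T < card S" using fS psubset_card_mono by blast
      then show "d dvd R T" using less.hyps \<open>T \<in> U\<close> by blast
    qed
    moreover have "d dvd (\<Sum>T\<in>{T\<in>U. T \<subseteq> S}. R T)" using assms(3) less.prems by blast
    ultimately have "d dvd (\<Sum>T\<in>{T\<in>U. T \<subseteq> S}. R T) - (\<Sum>T\<in>{T\<in>U. T \<subseteq> S} - {S}. R T)"
      by (rule dvd_diff[rotated])
    then show ?case using split by simp
  qed
qed

lemma card_layers:
  assumes "finite A" "finite R"
  shows "card {T. T \<subseteq> A \<and> card T \<in> R} = (\<Sum>t\<in>R. card A choose t)"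
proof -
  have eq: "{T. T \<subseteq> A \<and> card T \<in> R} = (\<Union>t\<in>R. {T. T \<subseteq> A \<and> card T = t})" by auto
  have "card (\<Union>t\<in>R. {T. T \<subseteq> A \<and> card T = t}) = (\<Sum>t\<in>R. card {T. T \<subseteq> A \<and> card T = t})"
    using assms by (intro card_UN_disjoint) (auto intro: finite_subset[of _ "Pow A"])
  then show ?thesis using eq assms(1) by (simp add: n_subsets)
qed



lemma dvd_sub_mod: "(b::int) dvd a - a mod b"
  by (simp add: minus_mod_eq_mult_div)

lemma gpoly_dvd:
  assumes "k \<in> K" "finite K"
    and "int p dvd (\<Sum>i\<in>{1..n-1}. xv X i) - int k \<or> int p dvd (\<Sum>i\<in>{1..n-1}. xv X i) - (int k - 1)"
  shows "int p dvd gpoly p n K X"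
proof -
  define t where "t = (\<Sum>i\<in>{1..n-1}. xv X i)"
  define H where "H = (\<lambda>h. h mod int p) ` (int ` K \<union> (\<lambda>k. int k - 1) ` K)"
  obtain y where y: "y \<in> int ` K \<union> (\<lambda>k. int k - 1) ` K" "int p dvd t - y"
    using assms unfolding t_def by blast
  have "t - y mod int p = (t - y) + (y - y mod int p)" by simp
  then have "int p dvd t - y mod int p" using y(2) dvd_sub_mod[of "int p" y] by (metis dvd_add)
  moreover have "y mod int p \<in> H" using y(1) unfolding H_def by blast
  moreover have "finite H" using assms(2) unfolding H_def by blast
  ultimately show ?thesis unfolding gpoly_def H_def[symmetric] t_def[symmetric]
    by (metis dvd_prodI dvd_trans)
qed

lemma gpoly_ndvd:
  assumes p: "prime p" and fK: "finite K"
    and nd: "\<forall>k\<in>K. \<not> int p dvd (\<Sum>i\<in>{1..n-1}. xv X i) - int k \<and> \<not> int p dvd (\<Sum>i\<in>{1..n-1}. xv X i) - (int k - 1)"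
  shows "\<not> int p dvd gpoly p n K X"
proof
  define t where "t = (\<Sum>i\<in>{1..n-1}. xv X i)"
  define H where "H = (\<lambda>h. h mod int p) ` (int ` K \<union> (\<lambda>k. int k - 1) ` K)"
  assume "int p dvd gpoly p n K X"
  then have "int p dvd (\<Prod>h\<in>H. t - h)" unfolding gpoly_def H_def t_def .
  moreover have "finite H" using fK unfolding H_def by blast
  moreover have "prime (int p)" using p by simp
  ultimately obtain h where h: "h \<in> H" "int p dvd t - h" using prime_dvd_prod_iff by blast
  then obtain y where y: "y \<in> int ` K \<union> (\<lambda>k. int k - 1) ` K" "h = y mod int p" unfolding H_def by blast
  have "t - y = (t - h) - (y - y mod int p)" using y(2) by simp
  then have "int p dvd t - y" using h(2) dvd_sub_mod[of "int p" y] by (metis dvd_diff)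
  then show False using y(1) nd unfolding t_def by blast
qed

lemma sum_xv_card: "finite A \<Longrightarrow> (\<Sum>i\<in>A. xv X i) = int (card (A \<inter> X))"
  using dotv_card[unfolded dotv_def] by blast

lemma qpoly_eval: "finite S \<Longrightarrow> qpoly n S X = (if n \<in> X then 0 else if S \<subseteq> X then 1 else 0)"
  by (simp add: qpoly_def prod_xv) (simp add: xv_def)

lemma gIpoly_eval: "finite I \<Longrightarrow> gIpoly p n K I X = gpoly p n K X * (if I \<subseteq> X then 1 else 0)"
  by (simp add: gIpoly_def prod_xv)

lemma gpoly_insert_n: "gpoly p n K (insert n X) = gpoly p n K X"
  unfolding gpoly_def xv_def by (intro prod.cong refl arg_cong2[where f="(-)"] sum.cong) auto

lemma fpoly_insert_n: "n \<notin> B \<Longrightarrow> fpoly L B (insert n X) = fpoly L B X"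
  unfolding fpoly_def dotv_def xv_def by (intro prod.cong refl arg_cong2[where f="(-)"] sum.cong) auto

lemma ndvd_small: "0 < x \<Longrightarrow> x < int p \<Longrightarrow> \<not> int p dvd x"
  using zdvd_imp_le by fastforce



lemma lowdeg_lin: "A \<subseteq> {1..n} \<Longrightarrow> lowdeg n 1 (\<lambda>X. (\<Sum>i\<in>A. xv X i) - c)"
proof -
  assume A: "A \<subseteq> {1..n}"
  then have fA: "finite A" by (rule finite_subset) simp
  have "lowdeg n 1 (\<lambda>X. (\<Sum>i\<in>A. xv X i))" using A by (intro lowdeg_sum fA ballI lowdeg_xv) auto
  moreover have "lowdeg n 1 (\<lambda>X. - c)" by (rule lowdeg_mono[OF lowdeg_const]) simp
  ultimately have "lowdeg n 1 (\<lambda>X. (\<Sum>i\<in>A. xv X i) + - c)" by (rule lowdeg_add)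
  then show ?thesis by simp
qed

theorem mainTheorem7:
  fixes p n :: nat and K L :: "nat set" and \<A> :: "nat set set"
  assumes "prime p"
    and "K \<subseteq> {0..<p}" and "L \<subseteq> {0..<p}" and "K \<inter> L = {}" and "K \<noteq> {}"
    and "\<forall>A\<in>\<A>. A \<subseteq> {1..n}"
    and "\<forall>A\<in>\<A>. card A mod p \<in> K"
    and "\<forall>A\<in>\<A>. \<forall>B\<in>\<A>. A \<noteq> B \<longrightarrow> card (A \<inter> B) mod p \<in> L"
    and "n \<ge> card L + Max K"
    and "int n < int p + int (Min K) \<or>
         (int (card L) - 2 * int (card K) + 1) + int (Max K) < int p + int (Min K) - 1"
  shows "lin_indep_mod p
           (Inl ` \<A>
            \<union> Inr ` Inl ` {S. S \<subseteq> {1..n-1} \<and> int (card S) \<le> int (card L) - 1}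
            \<union> Inr ` Inr ` {I. I \<subseteq> {1..n-1} \<and> int (card I) \<le> int (card L) - 2 * int (card K)})
           (allpolys p n K L) {X. X \<subseteq> {1..n}}
       \<and> card \<A> \<le> (\<Sum>t\<in>{t::nat. int (card L) - 2 * int (card K) + 1 \<le> int t \<and> t \<le> card L}.
                      (n - 1) choose t)"
proof -
  note pr = assms(1)
  define SS where "SS = {S. S \<subseteq> {1..n-1} \<and> int (card S) \<le> int (card L) - 1}"
  define II where "II = {I. I \<subseteq> {1..n-1} \<and> int (card I) \<le> int (card L) - 2 * int (card K)}"
  define Idx where "Idx = Inl ` \<A> \<union> Inr ` Inl ` SS \<union> Inr ` Inr ` II"
  have p1: "1 < p" using pr prime_gt_1_nat by blast
  have prI: "prime (int p)" using pr by simp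
  have fK: "finite K" using assms(2) by (rule finite_subset) simp
  have fL: "finite L" using assms(3) by (rule finite_subset) simp
  have "\<A> \<subseteq> Pow {1..n}" using assms(6) by blast
  then have fA: "finite \<A>" by (rule finite_subset) simp
  have fSS: "finite SS" unfolding SS_def by (rule finite_subset[of _ "Pow {1..n-1}"]) auto
  have fII: "finite II" unfolding II_def by (rule finite_subset[of _ "Pow {1..n-1}"]) auto
  have Asub: "\<And>A. A \<in> \<A> \<Longrightarrow> A \<subseteq> {1..n}" using assms(6) by blast
  have finA: "\<And>A. A \<in> \<A> \<Longrightarrow> finite A" by (rule finite_subset[OF Asub]) simp_all
  have r1: "card K \<ge> 1" using fK assms(5) by (simp add: Suc_le_eq card_gt_0_iff)
  have Kp: "\<And>k. k \<in> K \<Longrightarrow> k < p" using assms(2) by auto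
  have Lp: "\<And>l. l \<in> L \<Longrightarrow> l < p" using assms(3) by auto
  have MinK: "\<And>k. k \<in> K \<Longrightarrow> Min K \<le> k" using fK by simp
  have MaxK: "\<And>k. k \<in> K \<Longrightarrow> k \<le> Max K" using fK by simp
  have SSsub: "\<And>S. S \<in> SS \<Longrightarrow> S \<subseteq> {1..n-1}" unfolding SS_def by blast
  have IIsub: "\<And>S. S \<in> II \<Longrightarrow> S \<subseteq> {1..n-1}" unfolding II_def by blast
  have N1sub: "{1..n-1} \<subseteq> {1..n}" by auto
  have nN1: "n \<notin> {1..n-1}" by auto
  have fin1: "\<And>S. S \<subseteq> {1..n-1} \<Longrightarrow> finite S" by (erule finite_subset) simp

  have fA_off: "int p dvd fpoly L B A" if AB: "A \<in> \<A>" "B \<in> \<A>" "A \<noteq> B" for A B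
  proof -
    define l0 where "l0 = card (B \<inter> A) mod p"
    have l0L: "l0 \<in> L" using assms(8) AB unfolding l0_def by blast
    have "int p dvd dotv B A - int l0"
      using dvd_sub_mod[of "int p" "int (card (B \<inter> A))"] finA[OF AB(2)]
      by (simp add: dotv_card l0_def zmod_int)
    then show ?thesis unfolding fpoly_def using dvd_prodI[OF fL l0L, of "\<lambda>l. dotv B A - int l"]
      by (metis dvd_trans)
  qed
  have fA_diag: "\<not> int p dvd fpoly L A A" if A: "A \<in> \<A>" for A
  proof
    assume a: "int p dvd fpoly L A A"
    have "\<exists>l\<in>L. int p dvd dotv A A - int l"
      using a unfolding fpoly_def by (simp only: prime_dvd_prod_iff[OF fL prI])
    then obtain l where l: "l \<in> L" "int p dvd dotv A A - int l" by blast
    then have "int p dvd int (card A) - int l" using finA[OF A] by (simp add: dotv_card)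
    then have "int (card A) mod int p = int l mod int p" by (simp only: mod_eq_dvd_iff)
    also have "\<dots> = int l" using Lp[OF l(1)] by simp
    finally have "int (card A mod p) = int l" by (simp only: zmod_int)
    then have "card A mod p = l" by (simp only: of_nat_eq_iff)
    then show False using assms(7) A l(1) assms(4) by blast
  qed
  have gA: "int p dvd gpoly p n K A" if A: "A \<in> \<A>" for A
  proof -
    define k where "k = card A mod p"
    have kK: "k \<in> K" using assms(7) A unfolding k_def by blast
    have dk: "int p dvd int (card A) - int k"
      using dvd_sub_mod[of "int p" "int (card A)"] by (simp add: k_def zmod_int)
    have t: "(\<Sum>i\<in>{1..n-1}. xv A i) = int (card ({1..n-1} \<inter> A))" by (simp add: sum_xv_card)
    show ?thesis
    proof (cases "n \<in> A")
      case True
      have "{1..n-1} \<inter> A = A - {n}" using Asub[OF A] True by (fastforce simp: subset_iff)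
      moreover have "card A \<ge> 1" using True finA[OF A] by (metis One_nat_def Suc_leI card_gt_0_iff empty_iff)
      ultimately have "(\<Sum>i\<in>{1..n-1}. xv A i) = int (card A) - 1" using t True finA[OF A] by simp
      then have "int p dvd (\<Sum>i\<in>{1..n-1}. xv A i) - (int k - 1)" using dk by simp
      then show ?thesis using gpoly_dvd[OF kK fK] by blast
    next
      case False
      have "A \<subseteq> {1..n-1}"
      proof
        fix x assume "x \<in> A"
        then have "1 \<le> x" "x \<le> n" "x \<noteq> n" using Asub[OF A] False by auto
        then show "x \<in> {1..n-1}" by simp
      qed
      then have "{1..n-1} \<inter> A = A" by blast
      then have "(\<Sum>i\<in>{1..n-1}. xv A i) = int (card A)" using t by simp
      then show ?thesis using gpoly_dvd[OF kK fK] dk by simp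
    qed
  qed
  have indep: "lin_indep_mod p Idx (allpolys p n K L) {X. X \<subseteq> {1..n}}"
    unfolding lin_indep_mod_def
  proof (intro allI impI)
    fix c :: "nat set + nat set + nat set \<Rightarrow> int"
    assume hyp: "\<forall>x\<in>{X. X \<subseteq> {1..n}}. (\<Sum>i\<in>Idx. c i * allpolys p n K L i x) mod int p = 0"
    define cA where "cA A = c (Inl A)" for A
    define dS where "dS S = c (Inr (Inl S))" for S
    define eI where "eI I = c (Inr (Inr I))" for I
    define E where "E X = (\<Sum>A\<in>\<A>. cA A * fpoly L A X) + (\<Sum>S\<in>SS. dS S * qpoly n S X)
                         + (\<Sum>I\<in>II. eI I * gIpoly p n K I X)" for X
    have splitE: "(\<Sum>i\<in>Idx. c i * allpolys p n K L i X) = E X" for X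
    proof -
      have d1: "(Inl ` \<A> \<union> Inr ` Inl ` SS) \<inter> Inr ` Inr ` II = {}" by auto
      have d2: "Inl ` \<A> \<inter> Inr ` Inl ` SS = {}" by auto
      have "(\<Sum>i\<in>Idx. c i * allpolys p n K L i X)
          = (\<Sum>i\<in>Inl ` \<A>. c i * allpolys p n K L i X) + (\<Sum>i\<in>Inr ` Inl ` SS. c i * allpolys p n K L i X)
            + (\<Sum>i\<in>Inr ` Inr ` II. c i * allpolys p n K L i X)"
        unfolding Idx_def using fA fSS fII
        by (simp add: sum.union_disjoint[OF _ _ d1] sum.union_disjoint[OF _ _ d2])
      also have "\<dots> = E X" unfolding E_def
        by (simp add: sum.reindex inj_on_def allpolys_def cA_def dS_def eI_def)
      finally show ?thesis .
    qed
    have hE: "int p dvd E X" if "X \<subseteq> {1..n}" for X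
    proof -
      have "(\<Sum>i\<in>Idx. c i * allpolys p n K L i X) mod int p = 0" using hyp that by blast
      then have "E X mod int p = 0" by (simp only: splitE)
      then show ?thesis by (simp only: dvd_eq_mod_eq_0)
    qed
    have key: "int p dvd cA A" if A: "A \<in> \<A>" and q: "int p dvd (\<Sum>S\<in>SS. dS S * qpoly n S A)" for A
    proof -
      have r1: "int p dvd (\<Sum>B\<in>\<A>-{A}. cA B * fpoly L B A)"
      proof (rule dvd_sum)
        fix B assume "B \<in> \<A> - {A}"
        then have "int p dvd fpoly L B A" using fA_off[of A B] A by auto
        then show "int p dvd cA B * fpoly L B A" by (rule dvd_mult)
      qed
      have r3: "int p dvd (\<Sum>I\<in>II. eI I * gIpoly p n K I A)"
      proof (rule dvd_sum)
        fix I assume "I \<in> II"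
        then have "gIpoly p n K I A = gpoly p n K A * (if I \<subseteq> A then 1 else 0)"
          using fin1[OF IIsub] by (simp add: gIpoly_eval)
        then have "int p dvd gIpoly p n K I A" using gA[OF A] by simp
        then show "int p dvd eI I * gIpoly p n K I A" by (rule dvd_mult)
      qed
      have eq: "E A = cA A * fpoly L A A + ((\<Sum>B\<in>\<A>-{A}. cA B * fpoly L B A)
                + (\<Sum>S\<in>SS. dS S * qpoly n S A) + (\<Sum>I\<in>II. eI I * gIpoly p n K I A))"
        unfolding E_def using sum.remove[OF fA A, of "\<lambda>B. cA B * fpoly L B A"] by simp
      have "int p dvd E A" using hE Asub A by blast
      moreover have "int p dvd ((\<Sum>B\<in>\<A>-{A}. cA B * fpoly L B A)
                + (\<Sum>S\<in>SS. dS S * qpoly n S A) + (\<Sum>I\<in>II. eI I * gIpoly p n K I A))"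
        using r1 q r3 by (intro dvd_add)
      ultimately have "int p dvd E A - ((\<Sum>B\<in>\<A>-{A}. cA B * fpoly L B A)
                + (\<Sum>S\<in>SS. dS S * qpoly n S A) + (\<Sum>I\<in>II. eI I * gIpoly p n K I A))"
        by (rule dvd_diff)
      then have "int p dvd cA A * fpoly L A A" using eq by simp
      then show ?thesis using prime_dvd_mult_iff[OF prI] fA_diag[OF A] by blast
    qed
    have s1: "int p dvd cA A" if "A \<in> \<A>" "n \<in> A" for A
    proof -
      have "(\<Sum>S\<in>SS. dS S * qpoly n S A) = 0"
      proof (rule sum.neutral, rule ballI)
        fix S assume "S \<in> SS"
        then show "dS S * qpoly n S A = 0" using that(2) fin1[OF SSsub] by (simp add: qpoly_eval)
      qed
      then show ?thesis using key[OF that(1)] by simp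
    qed
    have s2: "\<forall>S\<in>SS. int p dvd dS S"
    proof (rule mobius[OF fSS])
      show "\<forall>S\<in>SS. finite S" using fin1 SSsub by blast
      show "\<forall>S\<in>SS. int p dvd (\<Sum>T\<in>{T\<in>SS. T \<subseteq> S}. dS T)"
      proof
        fix S assume S: "S \<in> SS"
        have Ssub: "S \<subseteq> {1..n-1}" using SSsub[OF S] .
        have "card L \<ge> 1" using S unfolding SS_def by auto
        then have n1: "n \<ge> 1" using assms(9) by linarith
        have nS: "n \<notin> S" using Ssub nN1 by blast
        have X1: "S \<subseteq> {1..n}" using Ssub N1sub by blast
        have "n \<in> {1..n}" using n1 by simp
        then have X2: "insert n S \<subseteq> {1..n}" using X1 by blast
        have diff: "E S - E (insert n S) = (\<Sum>B\<in>\<A>. cA B * (fpoly L B S - fpoly L B (insert n S)))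
            + (\<Sum>T\<in>SS. dS T * (qpoly n T S - qpoly n T (insert n S)))
            + (\<Sum>I\<in>II. eI I * (gIpoly p n K I S - gIpoly p n K I (insert n S)))"
          unfolding E_def right_diff_distrib sum_subtractf by simp
        have t1: "int p dvd (\<Sum>B\<in>\<A>. cA B * (fpoly L B S - fpoly L B (insert n S)))"
        proof (rule dvd_sum)
          fix B assume B: "B \<in> \<A>"
          show "int p dvd cA B * (fpoly L B S - fpoly L B (insert n S))"
          proof (cases "n \<in> B")
            case True
            show ?thesis using s1[OF B True] by (rule dvd_mult2)
          next
            case False
            then show ?thesis by (simp add: fpoly_insert_n)
          qed
        qed
        have t3: "(\<Sum>I\<in>II. eI I * (gIpoly p n K I S - gIpoly p n K I (insert n S))) = 0"
        proof (rule sum.neutral, rule ballI)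
          fix I assume I: "I \<in> II"
          have "I \<subseteq> insert n S \<longleftrightarrow> I \<subseteq> S" using IIsub[OF I] nN1 by blast
          then show "eI I * (gIpoly p n K I S - gIpoly p n K I (insert n S)) = 0"
            using fin1[OF IIsub[OF I]] by (simp add: gIpoly_eval gpoly_insert_n)
        qed
        have t2: "(\<Sum>T\<in>SS. dS T * (qpoly n T S - qpoly n T (insert n S))) = (\<Sum>T\<in>{T\<in>SS. T \<subseteq> S}. dS T)"
        proof -
          have "(\<Sum>T\<in>SS. dS T * (qpoly n T S - qpoly n T (insert n S))) = (\<Sum>T\<in>SS. if T \<subseteq> S then dS T else 0)"
            by (rule sum.cong[OF refl]) (simp add: qpoly_eval fin1[OF SSsub] nS)
          also have "\<dots> = (\<Sum>T\<in>{T\<in>SS. T \<subseteq> S}. dS T)" by (simp add: sum.inter_filter fSS)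
          finally show ?thesis .
        qed
        have "int p dvd E S - E (insert n S)" using hE[OF X1] hE[OF X2] by (rule dvd_diff)
        then have "int p dvd (\<Sum>B\<in>\<A>. cA B * (fpoly L B S - fpoly L B (insert n S))) + (\<Sum>T\<in>{T\<in>SS. T \<subseteq> S}. dS T)"
          using diff t2 t3 by simp
        then show "int p dvd (\<Sum>T\<in>{T\<in>SS. T \<subseteq> S}. dS T)" using t1 by (simp add: dvd_add_right_iff)
      qed
    qed
    have s3: "int p dvd cA A" if A: "A \<in> \<A>" for A
    proof (rule key[OF A], rule dvd_sum)
      fix S assume "S \<in> SS"
      then show "int p dvd dS S * qpoly n S A" using s2 by (simp add: dvd_mult2)
    qed
    define P where "P X = (\<Sum>I\<in>II. eI I * (if I \<subseteq> X then 1 else 0))" for X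
    have s4: "int p dvd gpoly p n K X * P X" if X: "X \<subseteq> {1..n}" for X
    proof -
      have a1: "int p dvd (\<Sum>A\<in>\<A>. cA A * fpoly L A X)"
      proof (rule dvd_sum)
        fix A assume "A \<in> \<A>" then show "int p dvd cA A * fpoly L A X" using s3 by (simp add: dvd_mult2)
      qed
      have a2: "int p dvd (\<Sum>S\<in>SS. dS S * qpoly n S X)"
      proof (rule dvd_sum)
        fix S assume "S \<in> SS" then show "int p dvd dS S * qpoly n S X" using s2 by (simp add: dvd_mult2)
      qed
      have "int p dvd E X - (\<Sum>A\<in>\<A>. cA A * fpoly L A X) - (\<Sum>S\<in>SS. dS S * qpoly n S X)"
        using hE[OF X] a1 a2 by (intro dvd_diff)
      then have g: "int p dvd (\<Sum>I\<in>II. eI I * gIpoly p n K I X)" unfolding E_def by simp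
      have "(\<Sum>I\<in>II. eI I * gIpoly p n K I X) = gpoly p n K X * P X"
        unfolding P_def sum_distrib_left
        by (rule sum.cong[OF refl]) (simp add: gIpoly_eval fin1[OF IIsub])
      then show ?thesis using g by simp
    qed
    have good: "\<not> int p dvd gpoly p n K X"
      if X: "X \<subseteq> {1..n-1}" "int (Max K) < int (card X)" "int (card X) < int p + int (Min K) - 1" for X
    proof (rule gpoly_ndvd[OF pr fK], rule ballI)
      fix k assume k: "k \<in> K"
      have "{1..n-1} \<inter> X = X" using X(1) by blast
      then have t: "(\<Sum>i\<in>{1..n-1}. xv X i) = int (card X)" by (simp add: sum_xv_card)
      have "int k \<le> int (Max K)" "int (Min K) \<le> int k" using MaxK[OF k] MinK[OF k] by auto
      then have c1: "0 < int (card X) - int k" "int (card X) - int k < int p"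
        and c2: "0 < int (card X) - (int k - 1)" "int (card X) - (int k - 1) < int p"
        using X(2,3) by linarith+
      show "\<not> int p dvd (\<Sum>i\<in>{1..n-1}. xv X i) - int k \<and> \<not> int p dvd (\<Sum>i\<in>{1..n-1}. xv X i) - (int k - 1)"
        unfolding t using ndvd_small[OF c1] ndvd_small[OF c2] by blast
    qed
    have PX: "int p dvd P X"
      if X: "X \<subseteq> {1..n-1}" "int (Max K) < int (card X)" "int (card X) < int p + int (Min K) - 1" for X
    proof -
      have "X \<subseteq> {1..n}" using X(1) N1sub by blast
      then have "int p dvd gpoly p n K X * P X" by (rule s4)
      then show ?thesis using prime_dvd_mult_iff[OF prI] good[OF X] by blast
    qed
    have s5: "int p dvd eI I" if "I \<in> II" for I
      using that
    proof (induction "n - card I" arbitrary: I rule: less_induct)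
      case less
      note I = less.prems
      have Isub: "I \<subseteq> {1..n-1}" using IIsub[OF I] .
      have fI: "finite I" using fin1[OF Isub] .
      have cI: "int (card I) \<le> int (card L) - 2 * int (card K)" using I unfolding II_def by blast
      define a where "a = Max K + 1"
      have cN1: "card ({1..n-1} - I) = (n - 1) - card I" using Isub fI by (simp add: card_Diff_subset)
      have "int a + int (card I) + 1 \<le> int n" using cI r1 assms(9) unfolding a_def by linarith
      then have na: "a + card I + 1 \<le> n" by linarith
      then have "a \<le> card ({1..n-1} - I)" unfolding cN1 by arith
      then obtain W where W: "W \<subseteq> {1..n-1} - I" "card W = a" "finite W"
        by (rule obtain_subset_with_card_n)
      define R where "R Z = (\<Sum>J\<in>II. if J \<inter> I = Z \<and> J \<subseteq> Z \<union> W then eI J else 0)" for Z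
      have ident: "(\<Sum>Z\<in>{Z\<in>Pow I. Z \<subseteq> Y}. R Z) = P (Y \<union> W)" if Y: "Y \<subseteq> I" for Y
      proof -
        have fZ: "finite {Z\<in>Pow I. Z \<subseteq> Y}" using fI by simp
        have "(\<Sum>Z\<in>{Z\<in>Pow I. Z \<subseteq> Y}. R Z)
            = (\<Sum>Z\<in>{Z\<in>Pow I. Z \<subseteq> Y}. \<Sum>J\<in>II. if J \<inter> I = Z then (if J \<subseteq> Z \<union> W then eI J else 0) else 0)"
          unfolding R_def by (intro sum.cong refl) auto
        also have "\<dots> = (\<Sum>J\<in>II. \<Sum>Z\<in>{Z\<in>Pow I. Z \<subseteq> Y}. if J \<inter> I = Z then (if J \<subseteq> Z \<union> W then eI J else 0) else 0)"
          by (rule sum.swap)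
        also have "\<dots> = (\<Sum>J\<in>II. if J \<inter> I \<in> {Z\<in>Pow I. Z \<subseteq> Y} then (if J \<subseteq> (J \<inter> I) \<union> W then eI J else 0) else 0)"
          by (rule sum.cong[OF refl], rule sum.delta'[OF fZ])
        also have "\<dots> = P (Y \<union> W)" unfolding P_def
        proof (rule sum.cong[OF refl])
          fix J assume "J \<in> II"
          have "(J \<inter> I \<in> {Z\<in>Pow I. Z \<subseteq> Y} \<and> J \<subseteq> (J \<inter> I) \<union> W) \<longleftrightarrow> J \<subseteq> Y \<union> W"
            using Y W(1) by blast
          then show "(if J \<inter> I \<in> {Z\<in>Pow I. Z \<subseteq> Y} then (if J \<subseteq> (J \<inter> I) \<union> W then eI J else 0) else 0)
              = eI J * (if J \<subseteq> Y \<union> W then 1 else 0)"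
            by (cases "J \<inter> I \<in> {Z\<in>Pow I. Z \<subseteq> Y}"; cases "J \<subseteq> (J \<inter> I) \<union> W"; cases "J \<subseteq> Y \<union> W") simp_all
        qed
        finally show ?thesis .
      qed
      have mob: "\<forall>Z\<in>Pow I. int p dvd R Z"
      proof (rule mobius)
        show "finite (Pow I)" using fI by simp
        show "\<forall>S\<in>Pow I. finite S" using fI by (auto intro: finite_subset[OF _ fI])
        show "\<forall>Y\<in>Pow I. int p dvd (\<Sum>Z\<in>{Z\<in>Pow I. Z \<subseteq> Y}. R Z)"
        proof
          fix Y assume "Y \<in> Pow I"
          then have Y: "Y \<subseteq> I" by simp
          have fY: "finite Y" using Y fI by (rule finite_subset)
          have dj: "Y \<inter> W = {}" using Y W(1) by blast
          have cX: "card (Y \<union> W) = card Y + a" using card_Un_disjoint[OF fY W(3) dj] W(2) by simp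
          have XS: "Y \<union> W \<subseteq> {1..n-1}" using Y Isub W(1) by blast
          have cY: "card Y \<le> card I" using fI Y by (rule card_mono)
          have lo: "int (Max K) < int (card (Y \<union> W))" using cX unfolding a_def by simp
          have hi: "int (card (Y \<union> W)) < int p + int (Min K) - 1"
          proof (cases "int n < int p + int (Min K)")
            case True
            have "card (Y \<union> W) \<le> card {1..n-1}" using XS by (rule card_mono[rotated]) simp
            then have "card (Y \<union> W) + 1 \<le> n" using na by simp
            then show ?thesis using True by linarith
          next
            case False
            then have "(int (card L) - 2 * int (card K) + 1) + int (Max K) < int p + int (Min K) - 1"
              using assms(10) by blast
            then show ?thesis using cX cY cI unfolding a_def by linarith
          qed
          show "int p dvd (\<Sum>Z\<in>{Z\<in>Pow I. Z \<subseteq> Y}. R Z)" using ident[OF Y] PX[OF XS lo hi] by simp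
        qed
      qed
      then have RI: "int p dvd R I" by blast
      have RIe: "R I = eI I + (\<Sum>J\<in>II-{I}. if J \<inter> I = I \<and> J \<subseteq> I \<union> W then eI J else 0)"
        unfolding R_def using sum.remove[OF fII I, of "\<lambda>J. if J \<inter> I = I \<and> J \<subseteq> I \<union> W then eI J else 0"]
        by simp
      have rest: "int p dvd (\<Sum>J\<in>II-{I}. if J \<inter> I = I \<and> J \<subseteq> I \<union> W then eI J else 0)"
      proof (rule dvd_sum)
        fix J assume J: "J \<in> II - {I}"
        show "int p dvd (if J \<inter> I = I \<and> J \<subseteq> I \<union> W then eI J else 0)"
        proof (cases "J \<inter> I = I \<and> J \<subseteq> I \<union> W")
          case True
          then have "I \<subset> J" using J by blast
          moreover have fJ: "finite J" using J fin1[OF IIsub] by blast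
          ultimately have "card I < card J" using psubset_card_mono by blast
          moreover have "card J \<le> card {1..n-1}" using J IIsub by (intro card_mono) auto
          ultimately have "n - card J < n - card I" by simp
          then have "int p dvd eI J" using less.hyps J by blast
          then show ?thesis using True by (simp only: if_P)
        next
          case False
          then have "(if J \<inter> I = I \<and> J \<subseteq> I \<union> W then eI J else 0) = 0" by (rule if_not_P)
          then show ?thesis by (simp only: dvd_0_right)
        qed
      qed
      have "int p dvd R I - (\<Sum>J\<in>II-{I}. if J \<inter> I = I \<and> J \<subseteq> I \<union> W then eI J else 0)"
        using RI rest by (rule dvd_diff)
      then show ?case using RIe by simp
    qed
    show "\<forall>i\<in>Idx. c i mod int p = 0"
    proof
      fix i assume "i \<in> Idx"
      then consider (a) A where "A \<in> \<A>" "i = Inl A" | (b) S where "S \<in> SS" "i = Inr (Inl S)"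
        | (c) I where "I \<in> II" "i = Inr (Inr I)" unfolding Idx_def by blast
      then have "int p dvd c i"
      proof cases
        case a then show ?thesis using s3[of A] by (simp add: cA_def)
      next
        case b then show ?thesis using s2 by (simp add: dS_def)
      next
        case c then show ?thesis using s5[of I] by (simp add: eI_def)
      qed
      then show "c i mod int p = 0" by (simp only: dvd_eq_mod_eq_0)
    qed
  qed
  have lowd: "lowdeg n (card L) (allpolys p n K L i)" if i: "i \<in> Idx" for i
  proof -
    from i consider (a) A where "A \<in> \<A>" "i = Inl A" | (b) S where "S \<in> SS" "i = Inr (Inl S)"
        | (c) I where "I \<in> II" "i = Inr (Inr I)" unfolding Idx_def by blast
    then show ?thesis
    proof cases
      case a
      have "lowdeg n (card L) (\<lambda>X. \<Prod>l\<in>L. (\<Sum>j\<in>A. xv X j) - int l)"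
        using Asub[OF a(1)] by (intro lowdeg_prod fL ballI lowdeg_lin)
      moreover have "allpolys p n K L i = (\<lambda>X. \<Prod>l\<in>L. (\<Sum>j\<in>A. xv X j) - int l)"
        using a(2) by (simp add: allpolys_def fpoly_def dotv_def fun_eq_iff)
      ultimately show ?thesis by simp
    next
      case b
      have cS: "card S + 1 \<le> card L" using b(1) unfolding SS_def by auto
      then have n1: "n \<in> {1..n}" using assms(9) by simp
      have "lowdeg n 1 (\<lambda>X. 1)" by (rule lowdeg_mono[OF lowdeg_const]) simp
      moreover have "lowdeg n 1 (\<lambda>X. (-1) * xv X n)" using n1 by (intro lowdeg_scale lowdeg_xv)
      ultimately have "lowdeg n 1 (\<lambda>X. 1 + (-1) * xv X n)" by (rule lowdeg_add)
      then have l1: "lowdeg n 1 (\<lambda>X. 1 - xv X n)" by simp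
      have fS: "finite S" using fin1[OF SSsub[OF b(1)]] .
      have "S \<subseteq> {1..n}" using SSsub[OF b(1)] N1sub by blast
      then have l2: "lowdeg n (card S) (\<lambda>X. \<Prod>j\<in>S. xv X j)"
        using fS by (intro lowdeg_prod ballI lowdeg_xv) auto
      have "lowdeg n (1 + card S) (\<lambda>X. (1 - xv X n) * (\<Prod>j\<in>S. xv X j))" by (rule lowdeg_mult[OF l1 l2])
      then have "lowdeg n (card L) (\<lambda>X. (1 - xv X n) * (\<Prod>j\<in>S. xv X j))"
        by (rule lowdeg_mono) (use cS in simp)
      moreover have "allpolys p n K L i = (\<lambda>X. (1 - xv X n) * (\<Prod>j\<in>S. xv X j))"
        using b(2) by (simp add: allpolys_def qpoly_def fun_eq_iff)
      ultimately show ?thesis by simp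
    next
      case c
      define H where "H = (\<lambda>h. h mod int p) ` (int ` K \<union> (\<lambda>k. int k - 1) ` K)"
      have "card H \<le> card (int ` K \<union> (\<lambda>k. int k - 1) ` K)" unfolding H_def by (rule card_image_le) (use fK in simp)
      also have "\<dots> \<le> card (int ` K) + card ((\<lambda>k. int k - 1) ` K)" by (rule card_Un_le)
      also have "\<dots> \<le> card K + card K" using fK by (intro add_mono card_image_le)
      finally have cH: "card H \<le> 2 * card K" by simp
      have fH: "finite H" unfolding H_def using fK by simp
      have l1: "lowdeg n (card H) (\<lambda>X. \<Prod>h\<in>H. (\<Sum>j\<in>{1..n-1}. xv X j) - h)"
        using fH N1sub by (intro lowdeg_prod ballI lowdeg_lin)
      have fI: "finite I" using fin1[OF IIsub[OF c(1)]] .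
      have "I \<subseteq> {1..n}" using IIsub[OF c(1)] N1sub by blast
      then have l2: "lowdeg n (card I) (\<lambda>X. \<Prod>j\<in>I. xv X j)"
        using fI by (intro lowdeg_prod ballI lowdeg_xv) auto
      have cI: "int (card I) \<le> int (card L) - 2 * int (card K)" using c(1) unfolding II_def by blast
      have "lowdeg n (card H + card I) (\<lambda>X. (\<Prod>h\<in>H. (\<Sum>j\<in>{1..n-1}. xv X j) - h) * (\<Prod>j\<in>I. xv X j))"
        by (rule lowdeg_mult[OF l1 l2])
      then have "lowdeg n (card L) (\<lambda>X. (\<Prod>h\<in>H. (\<Sum>j\<in>{1..n-1}. xv X j) - h) * (\<Prod>j\<in>I. xv X j))"
        by (rule lowdeg_mono) (use cH cI in linarith)
      moreover have "allpolys p n K L i = (\<lambda>X. (\<Prod>h\<in>H. (\<Sum>j\<in>{1..n-1}. xv X j) - h) * (\<Prod>j\<in>I. xv X j))"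
        using c(2) by (simp add: allpolys_def gIpoly_def gpoly_def H_def fun_eq_iff)
      ultimately show ?thesis by simp
    qed
  qed
  have fIdx: "finite Idx" unfolding Idx_def using fA fSS fII by simp
  have cIdx: "card Idx \<le> card (Ts n (card L))"
  proof (rule dim_bound[where m="\<lambda>T X. if T \<subseteq> X then 1 else 0", OF pr fIdx finite_Ts indep])
    show "\<forall>i\<in>Idx. \<exists>b. \<forall>x\<in>{X. X \<subseteq> {1..n}}. allpolys p n K L i x = (\<Sum>T\<in>Ts n (card L). b T * (if T \<subseteq> x then 1 else 0))"
      using lowd unfolding lowdeg_def by auto
  qed
  have cardIdx: "card Idx = card \<A> + card SS + card II"
  proof -
    have d1: "(Inl ` \<A> \<union> Inr ` Inl ` SS) \<inter> Inr ` Inr ` II = ({} :: (nat set + nat set + nat set) set)" by auto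
    have d2: "Inl ` \<A> \<inter> Inr ` Inl ` SS = ({} :: (nat set + nat set + nat set) set)" by auto
    have "card Idx = card (Inl ` \<A> :: (nat set + nat set + nat set) set) + card (Inr ` Inl ` SS :: (nat set + nat set + nat set) set) + card (Inr ` Inr ` II :: (nat set + nat set + nat set) set)"
      unfolding Idx_def using fA fSS fII by (simp add: card_Un_disjoint[OF _ _ d1] card_Un_disjoint[OF _ _ d2])
    also have "\<dots> = card \<A> + card SS + card II" by (simp add: card_image inj_on_def)
    finally show ?thesis .
  qed
  define R0 where "R0 = {t::nat. int (card L) - 2 * int (card K) + 1 \<le> int t \<and> t \<le> card L}"
  have fR0: "finite R0" unfolding R0_def by (rule finite_subset[of _ "{..card L}"]) auto
  define Q where "Q = {T. T \<subseteq> {1..n-1} \<and> card T \<le> card L}"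
  have fQ: "finite Q" unfolding Q_def by (rule finite_subset[of _ "Pow {1..n-1}"]) auto
  have cT: "card (Ts n (card L)) \<le> card Q + card SS"
  proof -
    have "Ts n (card L) \<subseteq> Q \<union> insert n ` SS"
    proof
      fix T assume "T \<in> Ts n (card L)"
      then have T: "T \<subseteq> {1..n}" "card T \<le> card L" by (auto simp: Ts_def)
      have fT: "finite T" using T(1) by (rule finite_subset) simp
      have TD: "T - {n} \<subseteq> {1..n-1}"
      proof
        fix x assume "x \<in> T - {n}"
        then have "1 \<le> x" "x \<le> n" "x \<noteq> n" using T(1) by auto
        then show "x \<in> {1..n-1}" by simp
      qed
      show "T \<in> Q \<union> insert n ` SS"
      proof (cases "n \<in> T")
        case False
        then have "T - {n} = T" by simp
        then show ?thesis using TD T(2) unfolding Q_def by auto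
      next
        case True
        have "card (T - {n}) = card T - 1" using True fT by simp
        moreover have "card T \<ge> 1" using True fT by (metis One_nat_def Suc_leI card_gt_0_iff empty_iff)
        ultimately have "int (card (T - {n})) \<le> int (card L) - 1" using T(2) by linarith
        then have "T - {n} \<in> SS" using TD unfolding SS_def by blast
        moreover have "T = insert n (T - {n})" using True by blast
        ultimately show ?thesis by blast
      qed
    qed
    then have "card (Ts n (card L)) \<le> card (Q \<union> insert n ` SS)" using fQ fSS by (intro card_mono) auto
    also have "\<dots> \<le> card Q + card (insert n ` SS)" by (rule card_Un_le)
    also have "\<dots> \<le> card Q + card SS" by (simp add: card_image_le fSS)
    finally show ?thesis .
  qed
  have Qsplit: "card Q = card II + card {T. T \<subseteq> {1..n-1} \<and> card T \<in> R0}"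
  proof -
    have "Q = II \<union> {T. T \<subseteq> {1..n-1} \<and> card T \<in> R0}" unfolding Q_def II_def R0_def by auto
    moreover have "II \<inter> {T. T \<subseteq> {1..n-1} \<and> card T \<in> R0} = {}" unfolding II_def R0_def by auto
    moreover have "finite {T. T \<subseteq> {1..n-1} \<and> card T \<in> R0}"
      by (rule finite_subset[of _ "Pow {1..n-1}"]) auto
    ultimately show ?thesis using fII by (simp add: card_Un_disjoint)
  qed
  have lay: "card {T. T \<subseteq> {1..n-1} \<and> card T \<in> R0} = (\<Sum>t\<in>R0. (n-1) choose t)"
    using card_layers[of "{1..n-1}" R0] fR0 by simp
  have "card \<A> \<le> (\<Sum>t\<in>R0. (n-1) choose t)" using cIdx cardIdx cT Qsplit lay by linarith
  then show ?thesis using indep unfolding Idx_def SS_def II_def R0_def by blast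
qed


end
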